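(* Let $\Omega\subset\mathbb{R}^d$ be a bounded domain with smooth boundary, $T>0$, $0<\alpha<1$, $\Omega_T=\Omega\times(0,T]$, and let $u\in C(\overline{\Omega}_T)$ be a function for which $L^\alpha u:=\partial_{0+}^\alpha u-\Delta u$ is defined and satisfies $L^\alpha u=F(x,t)\le 0$ (respectively $\ge0$) in $\Omega_T$. Suppose $u$ attains its maximum $M$ (respectively minimum $m$) over $\overline{\Omega}_T$ at a point $\mathrm{x}_0=(x_0,t_0)\in\partial\Omega\times(0,T]$, that $\Omega_T$ satisfies an interior strong sphere property at $\mathrm{x}_0$, and that there is a neighbourhood $V$ of $\mathrm{x}_0$ such that $u<M$ (respectively $u>m$) in $\Omega_T\cap V$. Then $$\frac{\partial u}{\partial\nu}\Big|_{\mathrm{x}_0}>0\quad(\text{respectively }<0),$$ where $\nu$ is the outward normal direction at $\mathrm{x}_0$.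
   Context: $\partial_{0+}^\alpha u(x,t)=\frac{1}{\Gamma(1-\alpha)}\int_0^t\frac{\partial_\tau u(x,\tau)}{(t-\tau)^\alpha}d\tau$ is the Caputo derivative. The interior strong sphere property of $\Omega_T$ at $\mathrm{x}_0=(x_0,t_0)$ means that there is a ball $B_R(\overline{\mathrm{x}})=\{(x,t):|x-\overline{x}|^2+(t-t_0)^2\le R^2\}\subset\overline{\Omega}_T$ with center $\overline{\mathrm{x}}=(\overline{x},t_0)$, $\overline{x}\ne x_0$, whose boundary contains $\mathrm{x}_0$ (so $|x_0-\overline x|=R$) and whose interior lies in $\Omega_T$ (and can be chosen inside $\Omega_T\cap V$). *)

theory Defs
  imports "HOL-Analysis.Analysis"
begin

fun Ck_on :: "nat \<Rightarrow> 'a::euclidean_space set \<Rightarrow> ('a \<Rightarrow> real) \<Rightarrow> bool" where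
  "Ck_on 0 U f = continuous_on U f"
| "Ck_on (Suc k) U f = (continuous_on U f \<and>
     (\<forall>i\<in>Basis. \<exists>g. (\<forall>x\<in>U. ((\<lambda>s. f (x + s *\<^sub>R i)) has_real_derivative g x) (at 0))
                      \<and> Ck_on k U g))"

definition smooth_on :: "'a::euclidean_space set \<Rightarrow> ('a \<Rightarrow> real) \<Rightarrow> bool" where
  "smooth_on U f \<longleftrightarrow> (\<forall>k. Ck_on k U f)"

definition local_defining_fun :: "'a::euclidean_space set \<Rightarrow> 'a \<Rightarrow> 'a set \<Rightarrow> ('a \<Rightarrow> real) \<Rightarrow> bool" where
  "local_defining_fun \<Omega> p U \<phi> \<longleftrightarrow> open U \<and> p \<in> U \<and> smooth_on U \<phi> \<and>
     (\<forall>y\<in>U. \<exists>g. g \<noteq> 0 \<and> (\<phi> has_derivative (\<lambda>v. g \<bullet> v)) (at y)) \<and>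
     \<Omega> \<inter> U = {y\<in>U. \<phi> y < 0}"

definition smooth_boundary :: "'a::euclidean_space set \<Rightarrow> bool" where
  "smooth_boundary \<Omega> \<longleftrightarrow> (\<forall>p\<in>frontier \<Omega>. \<exists>U \<phi>. local_defining_fun \<Omega> p U \<phi>)"

definition bounded_smooth_domain :: "'a::euclidean_space set \<Rightarrow> bool" where
  "bounded_smooth_domain \<Omega> \<longleftrightarrow> open \<Omega> \<and> connected \<Omega> \<and> \<Omega> \<noteq> {} \<and> bounded \<Omega> \<and> smooth_boundary \<Omega>"

definition outward_normal :: "'a::euclidean_space set \<Rightarrow> 'a \<Rightarrow> 'a \<Rightarrow> bool" where
  "outward_normal \<Omega> p \<nu> \<longleftrightarrow> (\<exists>U \<phi> g. local_defining_fun \<Omega> p U \<phi> \<and> g \<noteq> 0 \<and>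
       (\<phi> has_derivative (\<lambda>v. g \<bullet> v)) (at p) \<and> \<nu> = g /\<^sub>R norm g)"

definition Omega_T :: "'a set \<Rightarrow> real \<Rightarrow> ('a \<times> real) set" where
  "Omega_T \<Omega> T = \<Omega> \<times> {0<..T}"

definition caputo :: "real \<Rightarrow> ('a \<times> real \<Rightarrow> real) \<Rightarrow> 'a \<Rightarrow> real \<Rightarrow> real" where
  "caputo \<alpha> u x t = (1 / Gamma (1 - \<alpha>)) *
      integral {0..t} (\<lambda>\<tau>. deriv (\<lambda>s. u (x, s)) \<tau> / (t - \<tau>) powr \<alpha>)"

definition caputo_defined :: "real \<Rightarrow> ('a \<times> real \<Rightarrow> real) \<Rightarrow> 'a \<Rightarrow> real \<Rightarrow> bool" where
  "caputo_defined \<alpha> u x t \<longleftrightarrow>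
     (\<forall>\<tau>\<in>{0<..<t}. (\<lambda>s. u (x, s)) differentiable (at \<tau>)) \<and>
     (\<lambda>\<tau>. deriv (\<lambda>s. u (x, s)) \<tau> / (t - \<tau>) powr \<alpha>) integrable_on {0..t}"

definition second_partial :: "('a::euclidean_space \<Rightarrow> real) \<Rightarrow> 'a \<Rightarrow> 'a \<Rightarrow> real" where
  "second_partial f i x = deriv (\<lambda>s. deriv (\<lambda>r. f (x + r *\<^sub>R i)) s) 0"

definition laplacian :: "('a::euclidean_space \<Rightarrow> real) \<Rightarrow> 'a \<Rightarrow> real" where
  "laplacian f x = (\<Sum>i\<in>Basis. second_partial f i x)"

definition laplacian_defined :: "('a::euclidean_space \<Rightarrow> real) \<Rightarrow> 'a \<Rightarrow> bool" where
  "laplacian_defined f x \<longleftrightarrow> (\<forall>i\<in>Basis.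
     (\<exists>e>0. \<forall>s\<in>{-e<..<e}. (\<lambda>r. f (x + r *\<^sub>R i)) differentiable (at s)) \<and>
     (\<lambda>s. deriv (\<lambda>r. f (x + r *\<^sub>R i)) s) differentiable (at 0))"

definition L_alpha :: "real \<Rightarrow> ('a::euclidean_space \<times> real \<Rightarrow> real) \<Rightarrow> 'a \<Rightarrow> real \<Rightarrow> real" where
  "L_alpha \<alpha> u x t = caputo \<alpha> u x t - laplacian (\<lambda>y. u (y, t)) x"

definition L_alpha_defined :: "real \<Rightarrow> ('a::euclidean_space \<times> real \<Rightarrow> real) \<Rightarrow> 'a \<Rightarrow> real \<Rightarrow> bool" where
  "L_alpha_defined \<alpha> u x t \<longleftrightarrow> caputo_defined \<alpha> u x t \<and> laplacian_defined (\<lambda>y. u (y, t)) x"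

definition interior_sphere_property :: "('a::euclidean_space \<times> real) set \<Rightarrow> 'a \<Rightarrow> real \<Rightarrow> bool" where
  "interior_sphere_property D x0 t0 \<longleftrightarrow> (\<exists>xb R. xb \<noteq> x0 \<and> norm (x0 - xb) = R \<and>
      {(x, t). norm (x - xb)^2 + (t - t0)^2 \<le> R^2} \<subseteq> closure D \<and>
      {(x, t). norm (x - xb)^2 + (t - t0)^2 < R^2} \<subseteq> D)"

definition has_normal_derivative ::
    "('a::euclidean_space \<times> real \<Rightarrow> real) \<Rightarrow> 'a \<Rightarrow> 'a \<Rightarrow> real \<Rightarrow> real \<Rightarrow> bool" where
  "has_normal_derivative u \<nu> x0 t0 L \<longleftrightarrow>
     ((\<lambda>h. (u (x0, t0) - u (x0 - h *\<^sub>R \<nu>, t0)) / h) \<longlongrightarrow> L) (at_right 0)"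

end

theory Submission
  imports Defs
begin

lemma caputo_sign:
  fixes f Df :: "real \<Rightarrow> real" and t \<alpha> :: real
  assumes t: "0 < t" and al: "0 < \<alpha>" "\<alpha> < 1"
    and fc: "continuous_on {0..t} f"
    and fd: "\<And>\<tau>. \<tau> \<in> {0<..t} \<Longrightarrow> (f has_real_derivative Df \<tau>) (at \<tau>)"
    and fmax: "\<And>s. s \<in> {0..t} \<Longrightarrow> f s \<le> f t"
    and int: "(\<lambda>\<tau>. Df \<tau> / (t-\<tau>) powr \<alpha>) integrable_on {0..t}"
  shows "integral {0..t} (\<lambda>\<tau>. Df \<tau> / (t-\<tau>) powr \<alpha>) \<ge> 0"
proof -
  define k where "k = (\<lambda>\<tau>. Df \<tau> / (t-\<tau>) powr \<alpha>)"
  define G where "G = (\<lambda>\<tau>. (f \<tau> - f t) * (t-\<tau>) powr (-\<alpha>))"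
  define Hf where "Hf = (\<lambda>\<tau>. (f \<tau> - f t) * (\<alpha> * (t-\<tau>) powr (-\<alpha>-1)))"
  have key: "integral {0..t-d} k \<ge> G (t-d)" if d: "0 < d" "d < t" for d
  proof -
    have G': "(G has_real_derivative (k \<tau> + Hf \<tau>)) (at \<tau>)" if "\<tau> \<in> {0<..<t-d}" for \<tau>
    proof -
      from that d have tp: "t - \<tau> > 0" by auto
      have "(G has_real_derivative (Df \<tau> * (t-\<tau>) powr (-\<alpha>) + (f \<tau> - f t) * ((-\<alpha>) * (t-\<tau>) powr (-\<alpha>-1) * (-1)))) (at \<tau>)"
        unfolding G_def using tp that d
        by (auto intro!: derivative_eq_intros fd)
      moreover have "Df \<tau> * (t-\<tau>) powr (-\<alpha>) = k \<tau>"
        unfolding k_def by (simp add: powr_minus_divide)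
      ultimately show ?thesis unfolding Hf_def by simp
    qed
    have Gc: "continuous_on {0..t-d} G"
      unfolding G_def using d
      by (intro continuous_intros continuous_on_subset[OF fc]) auto
    have ftc: "((\<lambda>\<tau>. k \<tau> + Hf \<tau>) has_integral (G (t-d) - G 0)) {0..t-d}"
      using d Gc G' by (intro fundamental_theorem_of_calculus_interior) (auto simp: has_real_derivative_iff_has_vector_derivative[symmetric])
    have Hc: "continuous_on {0..t-d} Hf"
      unfolding Hf_def using d
      by (intro continuous_intros continuous_on_subset[OF fc]) auto
    have Hi: "Hf integrable_on {0..t-d}" using Hc integrable_continuous_real by blast
    have kint: "(k has_integral (G (t-d) - G 0 - integral {0..t-d} Hf)) {0..t-d}"
      using has_integral_diff[OF ftc integrable_integral[OF Hi]] by simp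
    have Hle: "integral {0..t-d} Hf \<le> 0"
    proof -
      have "integral {0..t-d} Hf \<le> integral {0..t-d} (\<lambda>_. 0::real)"
        using Hi d
      proof (intro integral_le)
        fix x assume x: "x \<in> {0..t-d}"
        have "f x - f t \<le> 0" using fmax[of x] x d by auto
        moreover have "0 \<le> \<alpha> * (t-x) powr (-\<alpha>-1)" using al by simp
        ultimately show "Hf x \<le> 0" unfolding Hf_def by (rule mult_nonpos_nonneg)
      qed auto
      then show ?thesis by simp
    qed
    have G0: "G 0 \<le> 0" unfolding G_def using fmax[of 0] t by (intro mult_nonpos_nonneg) auto
    have "integral {0..t-d} k = G (t-d) - G 0 - integral {0..t-d} Hf" using kint by (rule integral_unique)
    then show ?thesis using Hle G0 by linarith
  qed
  have lim1: "((\<lambda>d. integral {0..t-d} k) \<longlongrightarrow> integral {0..t} k) (at_right 0)"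
  proof -
    have "continuous_on {0..t} (\<lambda>x. integral {0..x} k)"
      using int unfolding k_def by (rule indefinite_integral_continuous_1)
    then have c: "((\<lambda>x. integral {0..x} k) \<longlongrightarrow> integral {0..t} k) (at t within {0..t})"
      using t by (simp add: continuous_on_def)
    have f2: "filterlim (\<lambda>d. t - d) (at t within {0..t}) (at_right 0)"
    proof (rule filterlim_at_withinI)
      show "filterlim (\<lambda>d. t - d) (nhds t) (at_right 0)"
        by (auto intro!: tendsto_eq_intros)
      have "eventually (\<lambda>d::real. d \<in> {0<..<t}) (at_right 0)"
        using t eventually_at_right_real by blast
      then show "\<forall>\<^sub>F d in at_right 0. t - d \<in> {0..t} - {t}"
        by eventually_elim auto
    qed
    show ?thesis using filterlim_compose[OF c f2] by simp
  qed
  have lim2: "((\<lambda>d. G (t-d)) \<longlongrightarrow> 0) (at_right 0)"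
  proof -
    have "((\<lambda>d. f (t - d)) has_real_derivative (- Df t)) (at 0)"
    proof -
      have "((\<lambda>d::real. t - d) has_real_derivative -1) (at 0)"
        by (auto intro!: derivative_eq_intros)
      moreover have "(f has_real_derivative Df t) (at (t - 0))" using fd[of t] t by simp
      ultimately show ?thesis using DERIV_chain2[of f "Df t" "\<lambda>d. t - d" 0 "-1"] by simp
    qed
    then have "((\<lambda>h. (f (t - (0+h)) - f (t - 0)) / h) \<longlongrightarrow> - Df t) (at 0)"
      by (rule DERIV_D)
    then have q: "((\<lambda>h. (f (t - h) - f t) / h) \<longlongrightarrow> - Df t) (at_right 0)"
      by (simp add: filterlim_at_split)
    have p: "((\<lambda>h. h powr (1-\<alpha>)) \<longlongrightarrow> 0) (at_right 0)"
      using al by (intro tendsto_zero_powrI[where b="1-\<alpha>"]) (auto intro!: tendsto_intros eventually_at_rightI[of 0 1])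
    have "((\<lambda>h. (f (t - h) - f t) / h * h powr (1-\<alpha>)) \<longlongrightarrow> - Df t * 0) (at_right 0)"
      by (rule tendsto_mult[OF q p])
    moreover have "eventually (\<lambda>h. (f (t - h) - f t) / h * h powr (1-\<alpha>) = G (t-h)) (at_right 0)"
    proof -
      have "eventually (\<lambda>h::real. h > 0) (at_right 0)" by (simp add: eventually_at_right_less)
      then show ?thesis
      proof eventually_elim
        case (elim h)
        have "h powr (1-\<alpha>) = h * h powr (-\<alpha>)" using elim
          by (simp add: powr_diff powr_minus_divide)
        then show ?case unfolding G_def using elim by simp
      qed
    qed
    ultimately show ?thesis by (simp add: tendsto_cong)
  qed
  have ev: "eventually (\<lambda>d. G (t-d) \<le> integral {0..t-d} k) (at_right 0)"
  proof -
    have "eventually (\<lambda>d::real. d \<in> {0<..<t}) (at_right 0)"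
      using t eventually_at_right_real by blast
    then show ?thesis by eventually_elim (use key in auto)
  qed
  have "0 \<le> integral {0..t} k"
    using tendsto_le[OF _ lim1 lim2 ev] by simp
  then show ?thesis unfolding k_def .
qed


lemma second_deriv_max:
  fixes F DF :: "real \<Rightarrow> real"
  assumes e: "e > 0"
    and d1: "\<And>r. r \<in> {-e<..<e} \<Longrightarrow> (F has_real_derivative DF r) (at r)"
    and d2: "(DF has_real_derivative D2) (at 0)"
    and mx: "\<And>r. r \<in> {-e<..<e} \<Longrightarrow> F r \<le> F 0"
  shows "D2 \<le> 0"
proof (rule ccontr)
  assume "\<not> D2 \<le> 0" then have pos: "D2 > 0" by simp
  have "DF 0 = 0"
  proof -
    have "\<forall>y. \<bar>y\<bar> < e \<longrightarrow> F y \<le> F 0" using mx by (auto simp: abs_less_iff)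
    then show ?thesis using DERIV_local_max[OF d1[of 0] e] e by (auto simp: dist_real_def)
  qed
  then obtain d where d: "d > 0" "\<And>h. h > 0 \<Longrightarrow> h < d \<Longrightarrow> 0 < DF h"
    using DERIV_pos_inc_right[OF d2 pos] by auto
  define h where "h = min d e / 2"
  have h: "0 < h" "h < d" "h < e" using d e by (auto simp: h_def)
  have "\<forall>x. 0 \<le> x \<and> x \<le> h \<longrightarrow> (F has_real_derivative DF x) (at x)"
    using h e by (auto intro!: d1)
  then obtain z where z: "0 < z" "z < h" "F h - F 0 = (h - 0) * DF z"
    using MVT2[of 0 h F DF] h by auto
  have "DF z > 0" using d(2)[of z] z h by auto
  then have "F h - F 0 > 0" using z h by simp
  moreover have "F h \<le> F 0" using mx[of h] h by auto
  ultimately show False by simp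
qed

lemma kernel_integral:
  fixes t \<alpha> :: real
  assumes t: "0 < t" and al: "\<alpha> < 1"
  shows "((\<lambda>\<tau>. (t-\<tau>) powr (-\<alpha>)) has_integral t powr (1-\<alpha>) / (1-\<alpha>)) {0..t}"
proof -
  define F where "F = (\<lambda>\<tau>. - ((t-\<tau>) powr (1-\<alpha>) / (1-\<alpha>)))"
  have c: "continuous_on {0..t} F"
    unfolding F_def using al
    by (intro continuous_intros continuous_on_powr') (auto intro!: continuous_intros)
  have d: "(F has_vector_derivative (t-x) powr (-\<alpha>)) (at x)" if "x \<in> {0<..<t}" for x
  proof -
    have "(F has_real_derivative (- ((1-\<alpha>) * (t-x) powr (1-\<alpha>-1) * (-1) / (1-\<alpha>)))) (at x)"
      unfolding F_def using that by (auto intro!: derivative_eq_intros)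
    then show ?thesis using al by (simp add: has_real_derivative_iff_has_vector_derivative[symmetric])
  qed
  have "((\<lambda>\<tau>. (t-\<tau>) powr (-\<alpha>)) has_integral F t - F 0) {0..t}"
    using fundamental_theorem_of_calculus_interior[OF _ c d] t by auto
  then show ?thesis by (simp add: F_def)
qed

lemma weighted_integrable_bound:
  fixes g :: "real \<Rightarrow> real" and t \<alpha> B :: real
  assumes t: "0 < t" and al: "0 < \<alpha>" "\<alpha> < 1"
    and gc: "continuous_on {0..t} g" and gb: "\<And>\<tau>. \<tau> \<in> {0..t} \<Longrightarrow> \<bar>g \<tau>\<bar> \<le> B"
  shows "(\<lambda>\<tau>. g \<tau> / (t-\<tau>) powr \<alpha>) integrable_on {0..t}"
    and "\<bar>integral {0..t} (\<lambda>\<tau>. g \<tau> / (t-\<tau>) powr \<alpha>)\<bar> \<le> B * (t powr (1-\<alpha>) / (1-\<alpha>))"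
proof -
  have ki: "(\<lambda>\<tau>. B * (t-\<tau>) powr (-\<alpha>)) integrable_on {0..t}"
    using has_integral_cmul[OF kernel_integral[OF t al(2)], of B] by (auto simp: integrable_on_def)
  have bnd: "\<bar>g \<tau> / (t-\<tau>) powr \<alpha>\<bar> \<le> B * (t-\<tau>) powr (-\<alpha>)" if "\<tau> \<in> {0..t}" for \<tau>
  proof (cases "\<tau> = t")
    case True then show ?thesis by simp
  next
    case False
    then have p: "(t-\<tau>) powr \<alpha> > 0" using that by auto
    have "\<bar>g \<tau> / (t-\<tau>) powr \<alpha>\<bar> = \<bar>g \<tau>\<bar> / (t-\<tau>) powr \<alpha>" using p by (simp add: abs_div)
    also have "\<dots> \<le> B / (t-\<tau>) powr \<alpha>" using gb[OF that] p by (simp add: divide_right_mono)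
    also have "\<dots> = B * (t-\<tau>) powr (-\<alpha>)" by (simp add: powr_minus_divide)
    finally show ?thesis .
  qed
  have ki': "(\<lambda>\<tau>. B * (t-\<tau>) powr (-\<alpha>)) integrable_on {0..<t}"
    by (rule integrable_spike_set[OF ki]) (auto intro: negligible_subset[of "{t}"])
  have meas: "(\<lambda>\<tau>. g \<tau> / (t-\<tau>) powr \<alpha>) \<in> borel_measurable (lebesgue_on {0..<t})"
  proof (rule continuous_imp_measurable_on_sets_lebesgue)
    show "continuous_on {0..<t} (\<lambda>\<tau>. g \<tau> / (t-\<tau>) powr \<alpha>)"
      by (intro continuous_intros continuous_on_subset[OF gc]) auto
  qed auto
  have i1: "(\<lambda>\<tau>. g \<tau> / (t-\<tau>) powr \<alpha>) integrable_on {0..<t}"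
    by (rule measurable_bounded_by_integrable_imp_integrable_real[OF meas ki']) (use bnd in auto)
  show i2: "(\<lambda>\<tau>. g \<tau> / (t-\<tau>) powr \<alpha>) integrable_on {0..t}"
    by (rule integrable_spike_set[OF i1]) (auto intro: negligible_subset[of "{t}"])
  have "norm (integral {0..t} (\<lambda>\<tau>. g \<tau> / (t-\<tau>) powr \<alpha>)) \<le> integral {0..t} (\<lambda>\<tau>. B * (t-\<tau>) powr (-\<alpha>))"
    by (rule integral_norm_bound_integral[OF i2 ki]) (use bnd in auto)
  also have "\<dots> = B * (t powr (1-\<alpha>) / (1-\<alpha>))"
    using integral_unique[OF kernel_integral[OF t al(2)]] by simp
  finally show "\<bar>integral {0..t} (\<lambda>\<tau>. g \<tau> / (t-\<tau>) powr \<alpha>)\<bar> \<le> B * (t powr (1-\<alpha>) / (1-\<alpha>))" by simp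
qed


lemma normal_positive:
  fixes \<Omega> :: "'a::euclidean_space set" and x0 xb \<nu> :: 'a and R :: real
  assumes op: "open \<Omega>" and fr: "x0 \<in> frontier \<Omega>" and R: "norm (x0 - xb) = R" "R > 0"
    and bl: "ball xb R \<subseteq> \<Omega>" and nu: "outward_normal \<Omega> x0 \<nu>"
  shows "\<nu> \<bullet> (x0 - xb) > 0" "norm \<nu> = 1"
proof -
  obtain U \<phi> g where ld: "local_defining_fun \<Omega> x0 U \<phi>" and g0: "g \<noteq> 0"
    and gd: "(\<phi> has_derivative (\<lambda>v. g \<bullet> v)) (at x0)" and nv: "\<nu> = g /\<^sub>R norm g"
    using nu unfolding outward_normal_def by blast
  have U: "open U" "x0 \<in> U" and OU: "\<Omega> \<inter> U = {y\<in>U. \<phi> y < 0}"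
    using ld unfolding local_defining_fun_def by auto
  show "norm \<nu> = 1" using nv g0 by simp
  have x0n: "x0 \<notin> \<Omega>" using fr op by (simp add: frontier_def interior_open)
  have phi0: "\<phi> x0 \<ge> 0"
  proof (rule ccontr)
    assume "\<not> \<phi> x0 \<ge> 0"
    then have "x0 \<in> \<Omega> \<inter> U" using OU U by auto
    then show False using x0n by auto
  qed
  define e where "e = x0 - xb"
  have gpos: "g \<bullet> e > 0"
  proof (rule ccontr)
    assume "\<not> g \<bullet> e > 0" then have ge: "g \<bullet> e \<le> 0" by simp
    define w where "w = g - e"
    have ee: "e \<bullet> e = R^2" using R by (metis e_def power2_norm_eq_inner)
    have we: "w \<bullet> e < 0" using ge R by (simp add: w_def inner_diff_left ee) (smt (verit) zero_less_power)
    have gw: "g \<bullet> w > 0" proof -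
      have "g \<bullet> g > 0" using g0 by simp
      then show ?thesis using ge unfolding w_def inner_diff_right by linarith
    qed
    have l: "((\<lambda>h. x0 + h *\<^sub>R w) has_derivative (\<lambda>h. h *\<^sub>R w)) (at 0)"
      by (auto intro!: derivative_eq_intros)
    have gd': "(\<phi> has_derivative (\<lambda>v. g \<bullet> v)) (at (x0 + 0 *\<^sub>R w))" using gd by simp
    have c: "((\<lambda>h. \<phi> (x0 + h *\<^sub>R w)) has_derivative (\<lambda>h. g \<bullet> (h *\<^sub>R w))) (at 0)"
      by (rule has_derivative_compose[OF l gd'])
    have eq: "(\<lambda>h. g \<bullet> (h *\<^sub>R w)) = (*) (g \<bullet> w)" by (auto simp: fun_eq_iff)
    have "((\<lambda>h. \<phi> (x0 + h *\<^sub>R w)) has_real_derivative (g \<bullet> w)) (at 0)"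
      using c unfolding eq has_field_derivative_def .
    then obtain d where d: "d > 0" "\<And>h. h > 0 \<Longrightarrow> h < d \<Longrightarrow> \<phi> x0 < \<phi> (x0 + h *\<^sub>R w)"
      using DERIV_pos_inc_right[OF _ gw] by force
    obtain r where r: "r > 0" "ball x0 r \<subseteq> U" using U open_contains_ball by blast
    have wn: "w \<noteq> 0" using we by auto
    have ww: "w \<bullet> w > 0" using wn by simp
    define a1 where "a1 = r / norm w"
    define a2 where "a2 = - (w \<bullet> e) / (w \<bullet> w)"
    have a1: "a1 > 0" using r wn by (simp add: a1_def)
    have a2: "a2 > 0" using we ww by (simp add: a2_def divide_neg_pos)
    define h where "h = min d (min a1 a2) / 2"
    have h: "h > 0" "h < d" "h < r / norm w" "h < - (w \<bullet> e) / (w \<bullet> w)"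
      using d(1) a1 a2 unfolding a1_def[symmetric] a2_def[symmetric] by (auto simp: h_def)
    have "\<phi> (x0 + h *\<^sub>R w) > 0" using d(2)[OF h(1,2)] phi0 by simp
    moreover have "x0 + h *\<^sub>R w \<in> U"
    proof -
      have "norm (h *\<^sub>R w) < r" using h wn by (simp add: pos_less_divide_eq mult.commute)
      then show ?thesis using r by (auto simp: dist_norm)
    qed
    moreover have "x0 + h *\<^sub>R w \<in> ball xb R"
    proof -
      have "h * (w \<bullet> w) < - (w \<bullet> e)" using h(4) ww by (metis minus_divide_left pos_less_divide_eq)
      then have "h * (h * (w \<bullet> w)) < h * (- (w \<bullet> e))" using h(1) by (rule mult_strict_left_mono)
      moreover have "h * (w \<bullet> e) < 0" using h(1) we by (rule mult_pos_neg)
      ultimately have lt: "2 * h * (w \<bullet> e) + h^2 * (w \<bullet> w) < 0" by (simp add: power2_eq_square algebra_simps)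
      have "(x0 + h *\<^sub>R w - xb) \<bullet> (x0 + h *\<^sub>R w - xb) = e \<bullet> e + 2 * h * (w \<bullet> e) + h^2 * (w \<bullet> w)"
        by (simp add: e_def algebra_simps inner_add_left inner_add_right inner_diff_left inner_diff_right inner_commute power2_eq_square)
      then have "norm (x0 + h *\<^sub>R w - xb)^2 < R^2" using lt ee by (simp add: power2_norm_eq_inner)
      then have "norm (x0 + h *\<^sub>R w - xb) < R" using R by (smt (verit) power_mono norm_ge_zero)
      then show ?thesis by (simp add: dist_norm norm_minus_commute)
    qed
    ultimately have "x0 + h *\<^sub>R w \<in> \<Omega> \<inter> U" "0 < \<phi> (x0 + h *\<^sub>R w)" using bl by auto
    then show False using OU by (metis (mono_tags, lifting) mem_Collect_eq order_less_asym)
  qed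
  show "\<nu> \<bullet> (x0 - xb) > 0" using gpos g0 nv by (simp add: e_def)
qed


lemma time_barrier_deriv:
  "((\<lambda>s. exp(-\<gamma>*(A + (s-t0)^2)) - c) has_real_derivative
     exp(-\<gamma>*(A+(\<tau>-t0)^2)) * (-\<gamma>*(2*(\<tau>-t0)))) (at \<tau>)"
  by (auto intro!: derivative_eq_intros)

lemma time_barrier_bound:
  fixes \<gamma> T A :: real
  assumes "\<gamma> > 0" "A \<ge> 0" "0 \<le> \<tau>" "\<tau> \<le> T" "0 \<le> t0" "t0 \<le> T"
  shows "\<bar>exp(-\<gamma>*(A+(\<tau>-t0)^2)) * (-\<gamma>*(2*(\<tau>-t0)))\<bar> \<le> 2*\<gamma>*T*exp(-\<gamma>*A)"
proof -
  have e: "exp(-\<gamma>*(A+(\<tau>-t0)^2)) \<le> exp(-\<gamma>*A)" using assms by (simp add: mult_nonneg_nonneg)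
  have a: "\<bar>-\<gamma>*(2*(\<tau>-t0))\<bar> \<le> 2*\<gamma>*T" using assms by (simp add: abs_mult abs_le_iff)
  have "\<bar>exp(-\<gamma>*(A+(\<tau>-t0)^2)) * (-\<gamma>*(2*(\<tau>-t0)))\<bar> = exp(-\<gamma>*(A+(\<tau>-t0)^2)) * \<bar>-\<gamma>*(2*(\<tau>-t0))\<bar>"
    by (simp add: abs_mult)
  also have "\<dots> \<le> exp(-\<gamma>*A) * (2*\<gamma>*T)"
    using e a by (intro mult_mono) auto
  finally show ?thesis by (simp only: mult.commute)
qed

lemma space_barrier_d1:
  "((\<lambda>r. exp(-\<gamma>*(A + 2*r*b + r^2 + S)) - c) has_real_derivative
      exp(-\<gamma>*(A + 2*r*b + r^2 + S)) * (-\<gamma>*(2*b + 2*r))) (at r)"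
  by (auto intro!: derivative_eq_intros simp: power2_eq_square algebra_simps)

lemma space_barrier_d2:
  "((\<lambda>r. exp(-\<gamma>*(A + 2*r*b + r^2 + S)) * (-\<gamma>*(2*b + 2*r))) has_real_derivative
      exp(-\<gamma>*(A+S))*(4*\<gamma>^2*b^2 - 2*\<gamma>)) (at 0)"
proof -
  have "((\<lambda>r. exp(-\<gamma>*(A + 2*r*b + r^2 + S)) * (-\<gamma>*(2*b + 2*r))) has_real_derivative
      exp(-\<gamma>*(A + 2*0*b + 0^2 + S)) * (-\<gamma>*(2*b + 2*0*1))*(-\<gamma>*(2*b + 2*0)) + exp(-\<gamma>*(A + 2*0*b + 0^2 + S)) * (-\<gamma>*(0 + 2*1))) (at 0)"
    by (auto intro!: derivative_eq_intros simp: power2_eq_square algebra_simps)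
  then show ?thesis by (simp add: power2_eq_square algebra_simps)
qed

lemma norm_line_sq:
  fixes x xc i :: "'a::euclidean_space"
  assumes "i \<in> Basis"
  shows "norm (x + r *\<^sub>R i - xc)^2 = norm (x - xc)^2 + 2*r*((x - xc) \<bullet> i) + r^2"
proof -
  have "x + r *\<^sub>R i - xc = (x - xc) + r *\<^sub>R i" by (simp add: algebra_simps)
  moreover have "i \<bullet> i = 1" using assms by simp
  ultimately show ?thesis unfolding power2_norm_eq_inner
    by (simp add: inner_add_left inner_add_right inner_diff_left inner_diff_right inner_commute power2_eq_square algebra_simps)
qed

lemma sum_basis_sq:
  fixes y :: "'a::euclidean_space"
  shows "(\<Sum>i\<in>Basis. (y \<bullet> i)^2) = norm y ^2"
  unfolding power2_norm_eq_inner by (subst euclidean_inner) (simp add: power2_eq_square)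

lemma convex_identity:
  fixes x x0 xb :: "'a::real_inner" and l :: real
  shows "norm (x - (x0 - l *\<^sub>R (x0 - xb)))^2 = (1-l)*norm(x-x0)^2 + l*norm(x-xb)^2 - l*(1-l)*norm(x0-xb)^2"
  unfolding power2_norm_eq_inner
  by (simp add: inner_diff_left inner_diff_right inner_add_left inner_add_right inner_commute algebra_simps)

lemma dist_pair_sq:
  fixes x y :: "'a::real_normed_vector" and t s :: real
  shows "dist (x,t) (y,s) ^2 = norm(x-y)^2 + (t-s)^2"
  by (simp add: dist_norm norm_Pair)


lemma core:
  fixes \<Omega> :: "'a::euclidean_space set" and T \<alpha> \<sigma> L :: real and u :: "'a \<times> real \<Rightarrow> real"
    and x0 :: 'a and t0 :: real and \<nu> :: 'a and V :: "('a \<times> real) set"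
  assumes op: "open \<Omega>" and T: "T > 0" and al: "0 < \<alpha>" "\<alpha> < 1"
    and cont: "continuous_on (closure (Omega_T \<Omega> T)) u"
    and Ldef: "\<forall>(x, t)\<in>Omega_T \<Omega> T. L_alpha_defined \<alpha> u x t"
    and x0: "x0 \<in> frontier \<Omega>" and t0: "t0 \<in> {0<..T}"
    and sphere: "interior_sphere_property (Omega_T \<Omega> T) x0 t0"
    and nu: "outward_normal \<Omega> x0 \<nu>"
    and sgn: "\<forall>(x, t)\<in>Omega_T \<Omega> T. \<sigma> * L_alpha \<alpha> u x t \<le> 0"
    and mx: "\<forall>p\<in>closure (Omega_T \<Omega> T). \<sigma> * u p \<le> \<sigma> * u (x0, t0)"
    and V: "open V" "(x0, t0) \<in> V" "\<forall>p\<in>Omega_T \<Omega> T \<inter> V. \<sigma> * u p < \<sigma> * u (x0, t0)"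
    and nd: "has_normal_derivative u \<nu> x0 t0 L"
  shows "\<sigma> * L > 0"
proof -
  define \<Theta> where "\<Theta> = Omega_T \<Omega> T"
  define M where "M = u (x0, t0)"
  obtain xb R where xb: "xb \<noteq> x0" "norm (x0 - xb) = R"
    and Bc: "{(x, t). norm (x - xb)^2 + (t - t0)^2 \<le> R^2} \<subseteq> closure \<Theta>"
    and Bo: "{(x, t). norm (x - xb)^2 + (t - t0)^2 < R^2} \<subseteq> \<Theta>"
    using sphere unfolding interior_sphere_property_def \<Theta>_def by blast
  have R: "R > 0" using xb by auto
  have clT: "closure \<Theta> = closure \<Omega> \<times> {0..T}"
    unfolding \<Theta>_def Omega_T_def closure_Times using T by simp
  have tR: "t0 + R \<le> T"
  proof -
    have "(xb, t0 + R) \<in> closure \<Theta>" using Bc by auto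
    then show ?thesis using clT by auto
  qed
  have ballO: "ball xb R \<subseteq> \<Omega>"
  proof
    fix y assume "y \<in> ball xb R"
    then have "norm (y - xb) < R" by (simp add: dist_norm norm_minus_commute)
    then have "norm (y - xb)^2 < R^2" using R by (simp add: power_strict_mono)
    then have "(y, t0) \<in> \<Theta>" using Bo by auto
    then show "y \<in> \<Omega>" by (simp add: \<Theta>_def Omega_T_def)
  qed
  have nupos: "\<nu> \<bullet> (x0 - xb) > 0" and nun: "norm \<nu> = 1"
    using normal_positive[OF op x0 xb(2) R ballO nu] by auto
  obtain r where r: "r > 0" "ball (x0, t0) r \<subseteq> V" using V open_contains_ball by blast
  define R' where "R' = min (R/2) (r/3)"
  define l where "l = R' / R"
  define xc where "xc = x0 - l *\<^sub>R (x0 - xb)"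
  have R': "R' > 0" "R' \<le> R/2" "3*R' \<le> r" using R r by (auto simp: R'_def)
  have l: "0 < l" "l \<le> 1/2" "R' = l * R" using R R' by (auto simp: l_def field_simps)
  have xcn: "norm (x0 - xc) = R'"
    using l xb(2) by (simp add: xc_def)
  define q where "q = (\<lambda>p::'a\<times>real. norm (fst p - xc)^2 + (snd p - t0)^2)"
  define Dd where "Dd = (\<lambda>p::'a\<times>real. norm (fst p - x0)^2 + (snd p - t0)^2)"
  have qc: "continuous_on UNIV q" unfolding q_def by (intro continuous_intros)
  have Ddc: "continuous_on UNIV Dd" unfolding Dd_def by (intro continuous_intros)
  have q0: "q (x0, t0) = R'^2" using xcn by (simp add: q_def)
  have S4a: "norm (x - xb)^2 + (t - t0)^2 < R^2"
    if a: "q (x,t) \<le> R'^2" "(x,t) \<noteq> (x0,t0)" for x t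
  proof -
    have ci: "norm (x - xc)^2 = (1-l)*norm(x-x0)^2 + l*norm(x-xb)^2 - l*(1-l)*R^2"
      using convex_identity[of x x0 l xb] xb(2) by (simp add: xc_def)
    have "norm(x-x0)^2 + (t-t0)^2 \<noteq> 0" using a(2) by (simp add: sum_power2_eq_zero_iff)
    then have Dp: "norm(x-x0)^2 + (t-t0)^2 > 0" by (simp add: add_pos_nonneg order_le_neq_trans)
    have "(1-l) * (norm(x-x0)^2 + (t-t0)^2) > 0" using l Dp by simp
    moreover have "l * (norm (x - xb)^2 + (t - t0)^2) = q (x,t) - (1-l) * (norm(x-x0)^2 + (t-t0)^2) + l*(1-l)*R^2"
      using ci by (simp add: q_def algebra_simps)
    moreover have "R'^2 = l*l*R^2" using l by (simp add: power2_eq_square)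
    ultimately have "l * (norm (x - xb)^2 + (t - t0)^2) < l * R^2"
      using a(1) by (simp add: algebra_simps power2_eq_square)
    then show ?thesis using l(1) by simp
  qed
  have S4\<Theta>: "(x,t) \<in> \<Theta>" if "q (x,t) \<le> R'^2" "(x,t) \<noteq> (x0,t0)" for x t
    using S4a[OF that] Bo by auto
  have S4cl: "(x,t) \<in> closure \<Theta>" if "q (x,t) \<le> R'^2" for x t
  proof (cases "(x,t) = (x0,t0)")
    case True
    then show ?thesis using Bc xb(2) by auto
  next
    case False then show ?thesis using S4\<Theta>[OF that False] closure_subset by blast
  qed
  have S4V: "(x,t) \<in> V" if a: "q (x,t) \<le> R'^2" for x t
  proof -
    have "norm (x - xc)^2 \<le> R'^2" using a unfolding q_def by simp (smt (verit) zero_le_power2)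
    moreover have h2: "(t - t0)^2 \<le> R'^2" using a unfolding q_def by simp (smt (verit) zero_le_power2)
    ultimately have n1: "norm (x - xc) \<le> R'" and n2: "\<bar>t - t0\<bar> \<le> R'" using R'
      by (auto intro: power2_le_imp_le simp: abs_le_square_iff)
    have "norm (x - x0) \<le> norm (x - xc) + norm (x0 - xc)"
      using norm_triangle_ineq4[of "x - xc" "x0 - xc"] by simp
    then have n3: "norm (x - x0) \<le> 2 * R'" using n1 xcn by simp
    have "dist (x,t) (x0,t0)^2 = norm (x - x0)^2 + (t-t0)^2" by (rule dist_pair_sq)
    also have "\<dots> \<le> (2*R')^2 + R'^2"
      using h2 n3 by (intro add_mono[OF power_mono h2]) auto
    also have "\<dots> < (3*R')^2" using R' by (simp add: power2_eq_square)
    also have "\<dots> \<le> r^2" using R' by (intro power_mono) auto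
    finally have "dist (x,t) (x0,t0) < r" by (rule power2_less_imp_less) (use r in simp)
    then show ?thesis using r(2) by (auto simp: dist_commute)
  qed

  have qnn: "q p \<ge> 0" for p by (simp add: q_def)
  have Ddnn: "Dd p \<ge> 0" for p by (simp add: Dd_def)
  define n where "n = real DIM('a)"
  define Gm where "Gm = Gamma (1 - \<alpha>)"
  have Gm: "Gm > 0" using al by (simp add: Gm_def)
  define K where "K = 2*T*(T powr (1-\<alpha>)/(1-\<alpha>)) / Gm"
  have K: "K \<ge> 0" using T al Gm by (simp add: K_def)
  define \<gamma> where "\<gamma> = 2*(K+n+1)/R'^2"
  have n0: "n \<ge> 0" by (simp add: n_def)
  have \<gamma>: "\<gamma> > 0" using K n0 R' by (simp add: \<gamma>_def)
  have \<gamma>R: "\<gamma> * R'^2 = 2*(K+n+1)" using R' by (simp add: \<gamma>_def)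
  define \<delta> where "\<delta> = min (R'/2) (sqrt (ln 2/\<gamma>))"
  have \<delta>: "\<delta> > 0" "\<delta> \<le> R'/2" using R' \<gamma> by (auto simp: \<delta>_def)
  have \<gamma>\<delta>: "\<gamma> * \<delta>^2 \<le> ln 2"
  proof -
    have "\<delta> \<le> sqrt (ln 2/\<gamma>)" by (simp add: \<delta>_def)
    then have "\<delta>^2 \<le> (sqrt (ln 2/\<gamma>))^2" using \<delta> by (intro power_mono) auto
    also have "\<dots> = ln 2/\<gamma>" using \<gamma> by simp
    finally show ?thesis using \<gamma> by (simp add: field_simps)
  qed
  define C where "C = {p. q p \<le> R'^2 \<and> \<delta>^2 \<le> Dd p}"
  have Cb: "C \<subseteq> cball (xc, t0) R'"
  proof
    fix p assume "p \<in> C"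
    then have "dist (xc,t0) p ^2 \<le> R'^2"
      using dist_pair_sq[of "fst p" "snd p" xc t0] by (auto simp: C_def q_def dist_commute)
    then show "p \<in> cball (xc, t0) R'" using R' by (auto intro: power2_le_imp_le)
  qed
  have Ccomp: "compact C"
  proof -
    have "closed C" unfolding C_def
      by (intro closed_Collect_conj closed_Collect_le qc Ddc continuous_on_const)
    then show ?thesis using Cb by (meson bounded_cball bounded_subset compact_eq_bounded_closed)
  qed
  have Csub: "p \<in> \<Theta> \<inter> V" if "p \<in> C" for p
  proof -
    obtain x t where p: "p = (x,t)" by (cases p)
    have "(x,t) \<noteq> (x0,t0)" using that \<delta> p by (auto simp: C_def Dd_def)
    then show ?thesis using that p S4\<Theta> S4V by (auto simp: C_def)
  qed
  obtain \<eta> where \<eta>: "\<eta> > 0" "\<And>p. p \<in> C \<Longrightarrow> \<sigma> * u p \<le> \<sigma> * M - \<eta>"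
  proof (cases "C = {}")
    case True then show ?thesis using that[of 1] by auto
  next
    case False
    have "continuous_on C (\<lambda>p. \<sigma> * u p)"
      using Csub closure_subset by (intro continuous_intros continuous_on_subset[OF cont]) (auto simp: \<Theta>_def)
    then obtain p1 where p1: "p1 \<in> C" "\<And>p. p \<in> C \<Longrightarrow> \<sigma> * u p \<le> \<sigma> * u p1"
      using continuous_attains_sup[OF Ccomp False] by blast
    have "\<sigma> * u p1 < \<sigma> * M" using V(3) Csub[OF p1(1)] by (auto simp: M_def \<Theta>_def)
    then show ?thesis using that[of "\<sigma> * M - \<sigma> * u p1"] p1 by auto
  qed
  define \<epsilon> where "\<epsilon> = \<eta> / 2"
  have \<epsilon>: "\<epsilon> > 0" using \<eta> by (simp add: \<epsilon>_def)
  define c0 where "c0 = exp (-\<gamma> * R'^2)"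
  define v where "v = (\<lambda>p. exp (-\<gamma> * q p) - c0)"
  define w where "w = (\<lambda>p. \<sigma> * u p - \<sigma> * M + \<epsilon> * v p)"
  have vle1: "v p \<le> 1" for p
  proof -
    have "exp (-\<gamma> * q p) \<le> 1" using \<gamma> qnn[of p] by (simp add: mult_nonneg_nonneg)
    moreover have "c0 > 0" by (simp add: c0_def)
    ultimately show ?thesis unfolding v_def by linarith
  qed
  have vneg: "v p \<le> 0" if "R'^2 \<le> q p" for p
    using that \<gamma> by (simp add: v_def c0_def mult_left_mono)
  have wC: "w p < 0" if "p \<in> C" for p
  proof -
    have "\<epsilon> * v p \<le> \<epsilon>" using vle1[of p] \<epsilon> by (simp add: mult_left_le)
    moreover have "\<epsilon> = \<eta>/2" by (simp add: \<epsilon>_def)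
    ultimately show ?thesis using \<eta>(2)[OF that] \<eta>(1) unfolding w_def by linarith
  qed
  have wout: "w p \<le> 0" if "p \<in> closure \<Theta>" "R'^2 \<le> q p" for p
  proof -
    have "\<epsilon> * v p \<le> 0" using vneg[OF that(2)] \<epsilon> by (simp add: mult_nonneg_nonpos)
    moreover have "\<sigma> * u p \<le> \<sigma> * M" using mx that(1) unfolding M_def \<Theta>_def by blast
    ultimately show ?thesis unfolding w_def by linarith
  qed
  have wcont: "continuous_on (closure \<Theta>) w"
    unfolding w_def v_def q_def using cont by (intro continuous_intros) (auto simp: \<Theta>_def)
  define Dc where "Dc = {p. q p \<le> R'^2 \<and> Dd p \<le> \<delta>^2}"
  define Do where "Do = {p. q p < R'^2 \<and> Dd p < \<delta>^2}"
  have Doo: "open Do" unfolding Do_def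
    by (intro open_Collect_conj open_Collect_less qc Ddc continuous_on_const)
  have DoDc: "Do \<subseteq> Dc" by (auto simp: Do_def Dc_def)
  have Dccl: "Dc \<subseteq> closure \<Theta>" using S4cl by (auto simp: Dc_def)
  have Dccomp: "compact Dc"
  proof -
    have "closed Dc" unfolding Dc_def
      by (intro closed_Collect_conj closed_Collect_le qc Ddc continuous_on_const)
    moreover have "Dc \<subseteq> cball (xc, t0) R'"
    proof
      fix p assume "p \<in> Dc"
      then have "dist (xc,t0) p ^2 \<le> R'^2"
        using dist_pair_sq[of "fst p" "snd p" xc t0] by (auto simp: Dc_def q_def dist_commute)
      then show "p \<in> cball (xc, t0) R'" using R' by (auto intro: power2_le_imp_le)
    qed
    ultimately show ?thesis by (meson bounded_cball bounded_subset compact_eq_bounded_closed)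
  qed
  have x0Dc: "(x0,t0) \<in> Dc" using q0 by (simp add: Dc_def Dd_def)
  have w0: "w (x0,t0) = 0" using q0 by (simp add: w_def v_def c0_def M_def)
  obtain P where P: "P \<in> Dc" "\<And>p. p \<in> Dc \<Longrightarrow> w p \<le> w P"
    using continuous_attains_sup[OF Dccomp _ continuous_on_subset[OF wcont Dccl]] x0Dc by blast
  have W: "w p \<le> 0" if "p \<in> Dc" for p
  proof (rule ccontr)
    assume "\<not> w p \<le> 0"
    then have wP: "w P > 0" using P(2)[OF that] by simp
    obtain xs ts where Pxt: "P = (xs, ts)" by (cases P)
    have qP: "q P < R'^2"
    proof (rule ccontr)
      assume "\<not> q P < R'^2" then have "R'^2 \<le> q P" by simp
      then have "w P \<le> 0" using wout Dccl P(1) by blast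
      then show False using wP by simp
    qed
    have DP: "Dd P < \<delta>^2"
    proof (rule ccontr)
      assume "\<not> Dd P < \<delta>^2"
      then have "P \<in> C" using P(1) by (auto simp: C_def Dc_def)
      then have "w P < 0" by (rule wC)
      then show False using wP by simp
    qed
    have PDo: "P \<in> Do" using qP DP by (simp add: Do_def)
    have Pne: "(xs, ts) \<noteq> (x0,t0)" using wP w0 Pxt by auto
    have qP': "q (xs, ts) \<le> R'^2" using qP Pxt by simp
    have NP: "norm (xs - xb)^2 + (ts - t0)^2 < R^2" by (rule S4a[OF qP' Pne])
    have P\<Theta>: "(xs, ts) \<in> \<Theta>" by (rule S4\<Theta>[OF qP' Pne])
    then have xsO: "xs \<in> \<Omega>" and ts: "0 < ts" "ts \<le> T" by (auto simp: \<Theta>_def Omega_T_def)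
    have tsT: "ts < T"
    proof -
      have "(ts - t0)^2 < R^2" using NP zero_le_power2[of "norm (xs - xb)"] by linarith
      then have "ts - t0 < R" by (rule power2_less_imp_less) (use R in simp)
      then show ?thesis using tR by simp
    qed
    define A where "A = norm (xs - xc)^2"
    define S where "S = (ts - t0)^2"
    have A0: "A \<ge> 0" by (simp add: A_def)
    have S0: "S \<ge> 0" by (simp add: S_def)
    have DPe: "norm (xs - x0)^2 + S < \<delta>^2" using DP by (simp add: Dd_def Pxt S_def)
    have S\<delta>: "S < \<delta>^2" using DPe zero_le_power2[of "norm (xs - x0)"] by linarith
    have nx: "norm (xs - x0) < \<delta>"
    proof -
      have "norm (xs - x0)^2 < \<delta>^2" using DPe S0 by simp
      then show ?thesis by (rule power2_less_imp_less) (use \<delta> in simp)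
    qed
    have Abig: "R'^2/4 \<le> A"
    proof -
      have e: "x0 - xc = (x0 - xs) + (xs - xc)" by simp
      have "norm (x0 - xc) \<le> norm (x0 - xs) + norm (xs - xc)" unfolding e by (rule norm_triangle_ineq)
      then have "R'/2 \<le> norm (xs - xc)" using xcn nx \<delta> by (simp add: norm_minus_commute)
      then have "(R'/2)^2 \<le> norm (xs - xc)^2" using R' by (intro power_mono) auto
      then show ?thesis by (simp add: A_def power_divide)
    qed
    have LT: "L_alpha_defined \<alpha> u xs T" using Ldef xsO T by (auto simp: Omega_T_def)
    have Lts: "L_alpha_defined \<alpha> u xs ts" using Ldef P\<Theta> by (auto simp: \<Theta>_def)
    have sgnP: "\<sigma> * L_alpha \<alpha> u xs ts \<le> 0" using sgn P\<Theta> by (auto simp: \<Theta>_def)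
    define ux where "ux = (\<lambda>s. u (xs, s))"
    have uxd: "(ux has_real_derivative deriv ux \<tau>) (at \<tau>)" if "\<tau> \<in> {0<..ts}" for \<tau>
    proof -
      have "\<tau> \<in> {0<..<T}" using that tsT by auto
      then have "ux differentiable (at \<tau>)" using LT unfolding L_alpha_defined_def caputo_defined_def ux_def by blast
      then show ?thesis by (simp add: DERIV_deriv_iff_real_differentiable)
    qed
    have Iu_int: "(\<lambda>\<tau>. deriv ux \<tau> / (ts - \<tau>) powr \<alpha>) integrable_on {0..ts}"
      using Lts unfolding L_alpha_defined_def caputo_defined_def ux_def by blast
    define Iu where "Iu = integral {0..ts} (\<lambda>\<tau>. deriv ux \<tau> / (ts - \<tau>) powr \<alpha>)"
    define \<Phi>' where "\<Phi>' = (\<lambda>\<tau>. exp(-\<gamma>*(A+(\<tau>-t0)^2)) * (-\<gamma>*(2*(\<tau>-t0))))"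
    define B\<Phi> where "B\<Phi> = 2*\<gamma>*T*exp(-\<gamma>*A)"
    have \<Phi>c: "continuous_on {0..ts} \<Phi>'" unfolding \<Phi>'_def by (intro continuous_intros)
    have \<Phi>b: "\<bar>\<Phi>' \<tau>\<bar> \<le> B\<Phi>" if "\<tau> \<in> {0..ts}" for \<tau>
      unfolding \<Phi>'_def B\<Phi>_def using that ts t0 \<gamma> A0 by (intro time_barrier_bound) auto
    have \<Phi>i: "(\<lambda>\<tau>. \<Phi>' \<tau> / (ts-\<tau>) powr \<alpha>) integrable_on {0..ts}"
      and I\<Phi>b: "\<bar>integral {0..ts} (\<lambda>\<tau>. \<Phi>' \<tau> / (ts-\<tau>) powr \<alpha>)\<bar> \<le> B\<Phi> * (ts powr (1-\<alpha>)/(1-\<alpha>))"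
      using weighted_integrable_bound[OF ts(1) al \<Phi>c \<Phi>b] by auto
    define I\<Phi> where "I\<Phi> = integral {0..ts} (\<lambda>\<tau>. \<Phi>' \<tau> / (ts-\<tau>) powr \<alpha>)"
    define f where "f = (\<lambda>s. w (xs, s))"
    have f_eq: "f = (\<lambda>s. \<sigma> * ux s - \<sigma> * M + \<epsilon> * (exp(-\<gamma>*(A + (s-t0)^2)) - c0))"
      by (rule ext) (simp add: f_def w_def v_def q_def ux_def A_def)
    define Df where "Df = (\<lambda>\<tau>. \<sigma> * deriv ux \<tau> + \<epsilon> * \<Phi>' \<tau>)"
    have fd: "(f has_real_derivative Df \<tau>) (at \<tau>)" if "\<tau> \<in> {0<..ts}" for \<tau>
    proof -
      have "((\<lambda>s. \<sigma> * ux s - \<sigma> * M + \<epsilon> * (exp(-\<gamma>*(A + (s-t0)^2)) - c0)) has_real_derivative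
               \<sigma> * deriv ux \<tau> - 0 + \<epsilon> * (exp(-\<gamma>*(A+(\<tau>-t0)^2)) * (-\<gamma>*(2*(\<tau>-t0))))) (at \<tau>)"
        by (intro DERIV_add DERIV_diff DERIV_cmult DERIV_const uxd[OF that] time_barrier_deriv)
      then show ?thesis unfolding f_eq Df_def \<Phi>'_def by simp
    qed
    have fc: "continuous_on {0..ts} f"
    proof -
      have "(\<lambda>s. (xs, s)) ` {0..ts} \<subseteq> closure \<Theta>" using xsO ts clT closure_subset by auto
      then show ?thesis unfolding f_def
        by (intro continuous_on_compose2[OF wcont]) (auto intro!: continuous_intros)
    qed
    have fts: "f ts = w P" by (simp add: f_def Pxt)
    have fmax: "f s \<le> f ts" if "s \<in> {0..ts}" for s
    proof -
      have pcl: "(xs, s) \<in> closure \<Theta>" using that xsO ts clT closure_subset by auto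
      consider "R'^2 \<le> q (xs,s)" | "q (xs,s) < R'^2" "\<delta>^2 \<le> Dd (xs,s)" | "q (xs,s) < R'^2" "Dd (xs,s) < \<delta>^2"
        by linarith
      then show ?thesis
      proof cases
        case 1 then show ?thesis using wout[OF pcl] wP fts by (simp add: f_def)
      next
        case 2 then have "(xs,s) \<in> C" by (simp add: C_def)
        then have "w (xs, s) < 0" by (rule wC)
        then show ?thesis using wP fts by (simp add: f_def)
      next
        case 3 then have "(xs,s) \<in> Dc" by (simp add: Dc_def)
        then show ?thesis using P(2) fts by (simp add: f_def)
      qed
    qed
    have Df_eq: "(\<lambda>\<tau>. Df \<tau> / (ts-\<tau>) powr \<alpha>) = (\<lambda>\<tau>. \<sigma> * (deriv ux \<tau> / (ts-\<tau>) powr \<alpha>) + \<epsilon> * (\<Phi>' \<tau> / (ts-\<tau>) powr \<alpha>))"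
      by (rule ext) (simp add: Df_def add_divide_distrib)
    have hasI: "((\<lambda>\<tau>. Df \<tau> / (ts-\<tau>) powr \<alpha>) has_integral (\<sigma> * Iu + \<epsilon> * I\<Phi>)) {0..ts}"
      unfolding Df_eq Iu_def I\<Phi>_def
      by (intro has_integral_add has_integral_mult_right integrable_integral Iu_int \<Phi>i)
    have time: "\<sigma> * Iu + \<epsilon> * I\<Phi> \<ge> 0"
    proof -
      have "(\<lambda>\<tau>. Df \<tau> / (ts-\<tau>) powr \<alpha>) integrable_on {0..ts}" using hasI by blast
      then have "integral {0..ts} (\<lambda>\<tau>. Df \<tau> / (ts-\<tau>) powr \<alpha>) \<ge> 0"
        using caputo_sign[OF ts(1) al fc fd fmax] by blast
      then show ?thesis using integral_unique[OF hasI] by simp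
    qed
    have I\<Phi>le: "I\<Phi> / Gm \<le> \<gamma> * K * exp(-\<gamma>*A)"
    proof -
      have "ts powr (1-\<alpha>) \<le> T powr (1-\<alpha>)" using ts al by (intro powr_mono2) auto
      then have "ts powr (1-\<alpha>)/(1-\<alpha>) \<le> T powr (1-\<alpha>)/(1-\<alpha>)" using al by (intro divide_right_mono) auto
      moreover have "B\<Phi> \<ge> 0" using \<gamma> T by (simp add: B\<Phi>_def)
      ultimately have "B\<Phi> * (ts powr (1-\<alpha>)/(1-\<alpha>)) \<le> B\<Phi> * (T powr (1-\<alpha>)/(1-\<alpha>))"
        by (intro mult_left_mono) auto
      then have "I\<Phi> \<le> B\<Phi> * (T powr (1-\<alpha>)/(1-\<alpha>))" using I\<Phi>b unfolding I\<Phi>_def by linarith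
      also have "B\<Phi> * (T powr (1-\<alpha>)/(1-\<alpha>)) = \<gamma> * K * exp(-\<gamma>*A) * Gm"
      proof -
        have "1 - \<alpha> \<noteq> 0" using al by simp
        then show ?thesis using Gm by (simp add: B\<Phi>_def K_def field_simps)
      qed
      finally show ?thesis using Gm by (simp add: pos_divide_le_eq)
    qed
    have lapdef: "laplacian_defined (\<lambda>y. u (y, ts)) xs" using Lts by (simp add: L_alpha_defined_def)
    obtain \<rho> where \<rho>: "\<rho> > 0" "ball P \<rho> \<subseteq> Do" using Doo PDo open_contains_ball by blast
    define \<Psi>2 where "\<Psi>2 = (\<lambda>i. exp(-\<gamma>*(A+S))*(4*\<gamma>^2*((xs - xc) \<bullet> i)^2 - 2*\<gamma>))"
    have sp: "\<sigma> * second_partial (\<lambda>y. u (y, ts)) i xs + \<epsilon> * \<Psi>2 i \<le> 0" if i: "i \<in> Basis" for i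
    proof -
      obtain e1 where e1: "e1 > 0" "\<forall>s\<in>{-e1<..<e1}. (\<lambda>r. u (xs + r *\<^sub>R i, ts)) differentiable (at s)"
        and d2: "(\<lambda>s. deriv (\<lambda>r. u (xs + r *\<^sub>R i, ts)) s) differentiable (at 0)"
        using lapdef i unfolding laplacian_defined_def by blast
      define ui where "ui = (\<lambda>r. u (xs + r *\<^sub>R i, ts))"
      define b where "b = (xs - xc) \<bullet> i"
      define F where "F = (\<lambda>r. w (xs + r *\<^sub>R i, ts))"
      have F_eq: "F = (\<lambda>r. \<sigma> * ui r - \<sigma> * M + \<epsilon> * (exp(-\<gamma>*(A + 2*r*b + r^2 + S)) - c0))"
        by (rule ext) (simp add: F_def w_def v_def q_def ui_def A_def S_def b_def norm_line_sq[OF i])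
      define e2 where "e2 = min e1 \<rho>"
      have e2: "e2 > 0" using e1 \<rho> by (simp add: e2_def)
      define DF where "DF = (\<lambda>r. \<sigma> * deriv ui r + \<epsilon> * (exp(-\<gamma>*(A + 2*r*b + r^2 + S)) * (-\<gamma>*(2*b + 2*r))))"
      have d1: "(F has_real_derivative DF r) (at r)" if "r \<in> {-e2<..<e2}" for r
      proof -
        have "ui differentiable (at r)" using e1 that by (auto simp: e2_def ui_def)
        then have h: "(ui has_real_derivative deriv ui r) (at r)" by (simp add: DERIV_deriv_iff_real_differentiable)
        have "((\<lambda>r. \<sigma> * ui r - \<sigma> * M + \<epsilon> * (exp(-\<gamma>*(A + 2*r*b + r^2 + S)) - c0)) has_real_derivative
                \<sigma> * deriv ui r - 0 + \<epsilon> * (exp(-\<gamma>*(A + 2*r*b + r^2 + S)) * (-\<gamma>*(2*b + 2*r)))) (at r)"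
          by (intro DERIV_add DERIV_diff DERIV_cmult DERIV_const h space_barrier_d1)
        then show ?thesis unfolding F_eq DF_def by simp
      qed
      have d2': "(DF has_real_derivative (\<sigma> * second_partial (\<lambda>y. u (y, ts)) i xs + \<epsilon> * \<Psi>2 i)) (at 0)"
      proof -
        have h: "((\<lambda>s. deriv ui s) has_real_derivative deriv (\<lambda>s. deriv ui s) 0) (at 0)"
          using d2 by (simp add: DERIV_deriv_iff_real_differentiable ui_def)
        have "(DF has_real_derivative \<sigma> * deriv (\<lambda>s. deriv ui s) 0 + \<epsilon> * (exp(-\<gamma>*(A+S))*(4*\<gamma>^2*b^2 - 2*\<gamma>))) (at 0)"
          unfolding DF_def by (intro DERIV_add DERIV_cmult h space_barrier_d2)
        moreover have "second_partial (\<lambda>y. u (y, ts)) i xs = deriv (\<lambda>s. deriv ui s) 0"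
          by (simp add: second_partial_def ui_def)
        moreover have "\<Psi>2 i = exp(-\<gamma>*(A+S))*(4*\<gamma>^2*b^2 - 2*\<gamma>)" by (simp add: \<Psi>2_def b_def)
        ultimately show ?thesis by simp
      qed
      have mxF: "F r \<le> F 0" if "r \<in> {-e2<..<e2}" for r
      proof -
        have "norm (r *\<^sub>R i) < \<rho>" using that i by (auto simp: e2_def)
        then have "dist P (xs + r *\<^sub>R i, ts) < \<rho>"
          by (simp add: Pxt dist_Pair_Pair dist_norm)
        then have "(xs + r *\<^sub>R i, ts) \<in> Dc" using \<rho> DoDc by auto
        then have "F r \<le> w P" using P(2) by (simp add: F_def)
        moreover have "F 0 = w P" by (simp add: F_def Pxt)
        ultimately show ?thesis by simp
      qed
      show ?thesis using second_deriv_max[OF e2 d1 d2' mxF] by simp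
    qed
    have sumPsi: "(\<Sum>i\<in>Basis. \<Psi>2 i) = exp(-\<gamma>*(A+S)) * (4*\<gamma>^2*A - 2*\<gamma>*n)"
    proof -
      have "(\<Sum>i\<in>Basis. \<Psi>2 i) = exp(-\<gamma>*(A+S)) * (\<Sum>i\<in>Basis. 4*\<gamma>^2*((xs - xc) \<bullet> i)^2 - 2*\<gamma>)"
        by (simp add: \<Psi>2_def sum_distrib_left)
      also have "(\<Sum>i\<in>Basis. 4*\<gamma>^2*((xs - xc) \<bullet> i)^2 - 2*\<gamma>) = 4*\<gamma>^2*(\<Sum>i\<in>Basis. ((xs - xc) \<bullet> i)^2) - 2*\<gamma>*n"
        by (simp add: sum_subtractf sum_distrib_left n_def)
      also have "(\<Sum>i\<in>Basis. ((xs - xc) \<bullet> i)^2) = A" by (simp add: sum_basis_sq A_def)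
      finally show ?thesis .
    qed
    have space: "\<sigma> * laplacian (\<lambda>y. u (y, ts)) xs + \<epsilon> * (exp(-\<gamma>*(A+S)) * (4*\<gamma>^2*A - 2*\<gamma>*n)) \<le> 0"
    proof -
      have "(\<Sum>i\<in>Basis. \<sigma> * second_partial (\<lambda>y. u (y, ts)) i xs + \<epsilon> * \<Psi>2 i) \<le> 0"
        using sp by (intro sum_nonpos) auto
      moreover have "(\<Sum>i\<in>Basis. \<sigma> * second_partial (\<lambda>y. u (y, ts)) i xs + \<epsilon> * \<Psi>2 i)
          = \<sigma> * laplacian (\<lambda>y. u (y, ts)) xs + \<epsilon> * (\<Sum>i\<in>Basis. \<Psi>2 i)"
        by (simp add: sum.distrib sum_distrib_left laplacian_def)
      ultimately show ?thesis using sumPsi by simp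
    qed
    have lapbig: "exp(-\<gamma>*(A+S)) * (4*\<gamma>^2*A - 2*\<gamma>*n) > \<gamma> * K * exp(-\<gamma>*A)"
    proof -
      have "\<gamma> * S \<le> \<gamma> * \<delta>^2" using S\<delta> \<gamma> by (intro mult_left_mono) auto
      then have "\<gamma> * S \<le> ln 2" using \<gamma>\<delta> by linarith
      then have "exp (-(\<gamma> * S)) \<ge> exp (- ln 2)" by simp
      then have eS: "exp (-\<gamma> * S) \<ge> 1/2" by (simp add: exp_minus)
      have "\<gamma> * A \<ge> \<gamma> * (R'^2/4)" using Abig \<gamma> by (intro mult_left_mono) auto
      then have gA: "\<gamma> * A \<ge> (K+n+1)/2" using \<gamma>R by simp
      have "\<gamma> * (\<gamma> * A) \<ge> \<gamma> * ((K+n+1)/2)" using gA \<gamma> by (intro mult_left_mono) auto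
      then have g1: "4*\<gamma>^2*A - 2*\<gamma>*n \<ge> 2*\<gamma>*(K+1)" by (simp add: power2_eq_square algebra_simps)
      have pos: "2*\<gamma>*(K+1) > 0" using \<gamma> K by simp
      have "exp(-\<gamma>*(A+S)) = exp(-\<gamma>*A) * exp(-\<gamma>*S)" by (simp add: exp_add[symmetric] algebra_simps)
      then have "exp(-\<gamma>*(A+S)) * (4*\<gamma>^2*A - 2*\<gamma>*n) \<ge> exp(-\<gamma>*A) * (1/2) * (2*\<gamma>*(K+1))"
        using eS g1 pos by (simp only:) (intro mult_mono mult_left_mono, auto)
      also have "exp(-\<gamma>*A) * (1/2) * (2*\<gamma>*(K+1)) = \<gamma> * K * exp(-\<gamma>*A) + \<gamma> * exp(-\<gamma>*A)" by (simp add: algebra_simps)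
      finally show ?thesis using \<gamma> by (smt (verit) exp_gt_zero mult_pos_pos)
    qed
    have Lform: "L_alpha \<alpha> u xs ts = Iu / Gm - laplacian (\<lambda>y. u (y, ts)) xs"
      by (simp add: L_alpha_def caputo_def Iu_def Gm_def ux_def)
    have t1: "- (\<epsilon> * I\<Phi>) / Gm \<le> \<sigma> * Iu / Gm"
    proof (rule divide_right_mono)
      show "- (\<epsilon> * I\<Phi>) \<le> \<sigma> * Iu" using time by linarith
      show "0 \<le> Gm" using Gm by simp
    qed
    have t1': "- (\<epsilon> * I\<Phi>) / Gm = - (\<epsilon> * I\<Phi> / Gm)" by simp
    have "\<epsilon> * (I\<Phi> / Gm) \<le> \<epsilon> * (\<gamma> * K * exp(-\<gamma>*A))"
      by (rule mult_left_mono[OF I\<Phi>le]) (use \<epsilon> in simp)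
    then have t2: "\<epsilon> * I\<Phi> / Gm \<le> \<epsilon> * (\<gamma> * K * exp(-\<gamma>*A))" by simp
    have t3: "\<sigma> * L_alpha \<alpha> u xs ts = \<sigma> * Iu / Gm - \<sigma> * laplacian (\<lambda>y. u (y, ts)) xs"
      unfolding Lform by (simp add: algebra_simps)
    have t4: "\<epsilon> * (\<gamma> * K * exp(-\<gamma>*A)) < \<epsilon> * (exp(-\<gamma>*(A+S)) * (4*\<gamma>^2*A - 2*\<gamma>*n))"
      using lapbig \<epsilon> by simp
    have "\<sigma> * L_alpha \<alpha> u xs ts > 0"
      using t1 t1' t2 t3 t4 space by linarith
    then show False using sgnP by simp
  qed
  define \<beta> where "\<beta> = \<nu> \<bullet> (x0 - xc)"
  have \<beta>: "\<beta> > 0"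
  proof -
    have "x0 - xc = l *\<^sub>R (x0 - xb)" by (simp add: xc_def)
    then have "\<beta> = l * (\<nu> \<bullet> (x0 - xb))" by (simp add: \<beta>_def)
    then show ?thesis using nupos l by simp
  qed
  define c1 where "c1 = \<epsilon> * c0 * \<gamma> * \<beta>"
  have c0p: "c0 > 0" by (simp add: c0_def)
  have c1: "c1 > 0" using \<epsilon> \<gamma> \<beta> c0p by (simp add: c1_def)
  have ev: "eventually (\<lambda>h. c1 \<le> \<sigma> * ((u (x0,t0) - u (x0 - h *\<^sub>R \<nu>, t0)) / h)) (at_right 0)"
  proof -
    have "eventually (\<lambda>h::real. h \<in> {0<..<min \<delta> \<beta>}) (at_right 0)"
      using \<delta> \<beta> eventually_at_right_real[of 0 "min \<delta> \<beta>"] by simp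
    then show ?thesis
    proof eventually_elim
      case (elim h)
      then have h: "0 < h" "h < \<delta>" "h < \<beta>" by auto
      define ph where "ph = (x0 - h *\<^sub>R \<nu>, t0)"
      have qph: "q ph = R'^2 - 2*h*\<beta> + h^2"
      proof -
        have e: "fst ph - xc = (x0 - xc) - h *\<^sub>R \<nu>" by (simp add: ph_def algebra_simps)
        have "norm ((x0 - xc) - h *\<^sub>R \<nu>)^2 = norm (x0 - xc)^2 - 2*h*\<beta> + h^2 * norm \<nu>^2"
          unfolding power2_norm_eq_inner \<beta>_def
          by (simp add: inner_diff_left inner_diff_right inner_commute power2_eq_square algebra_simps)
        moreover have "q ph = norm (fst ph - xc)^2" by (simp add: q_def ph_def)
        ultimately show ?thesis using xcn nun unfolding e by simp
      qed
      have "h * h \<le> h * \<beta>" using h by (intro mult_left_mono) auto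
      then have hh: "h^2 \<le> h * \<beta>" by (simp add: power2_eq_square)
      have "ph \<in> Dc"
      proof -
        have hb: "h * \<beta> > 0" using h \<beta> by simp
        have "2*h*\<beta> = 2*(h*\<beta>)" by simp
        then have "q ph \<le> R'^2" using qph hh hb by linarith
        moreover have "Dd ph = h^2" using nun h by (simp add: Dd_def ph_def)
        moreover have "h^2 \<le> \<delta>^2" using h by (intro power_mono) auto
        ultimately show ?thesis by (simp add: Dc_def)
      qed
      then have wph: "w ph \<le> 0" by (rule W)
      have vph: "v ph \<ge> c0 * (\<gamma> * (h * \<beta>))"
      proof -
        have ar: "-\<gamma> * (R'^2 - 2*h*\<beta> + h^2) = -\<gamma>*R'^2 + \<gamma>*(2*h*\<beta> - h^2)" by (simp add: algebra_simps)
        have "exp (-\<gamma> * q ph) = c0 * exp (\<gamma> * (2*h*\<beta> - h^2))"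
          unfolding qph c0_def ar exp_add by simp
        moreover have "exp (\<gamma> * (2*h*\<beta> - h^2)) \<ge> 1 + \<gamma> * (2*h*\<beta> - h^2)" by (rule exp_ge_add_one_self)
        moreover have "\<gamma> * (2*h*\<beta> - h^2) \<ge> \<gamma> * (h * \<beta>)"
        proof (rule mult_left_mono)
          show "h * \<beta> \<le> 2*h*\<beta> - h^2" using hh by linarith
        qed (use \<gamma> in simp)
        ultimately have "1 + \<gamma> * (h * \<beta>) \<le> exp (\<gamma> * (2*h*\<beta> - h^2))"
          by linarith
        then have "c0 * (1 + \<gamma> * (h * \<beta>)) \<le> c0 * exp (\<gamma> * (2*h*\<beta> - h^2))"
          using c0p by (intro mult_left_mono) auto
        then have "exp (-\<gamma> * q ph) \<ge> c0 * (1 + \<gamma> * (h * \<beta>))"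
          using \<open>exp (-\<gamma> * q ph) = c0 * exp (\<gamma> * (2*h*\<beta> - h^2))\<close> by simp
        then show ?thesis by (simp add: v_def algebra_simps)
      qed
      have "\<epsilon> * v ph \<ge> \<epsilon> * (c0 * (\<gamma> * (h * \<beta>)))" using vph \<epsilon> by (intro mult_left_mono) auto
      then have "\<sigma> * (u (x0,t0) - u ph) \<ge> c1 * h"
        using wph unfolding w_def M_def c1_def by (simp add: algebra_simps)
      then have "c1 * h / h \<le> \<sigma> * (u (x0,t0) - u ph) / h" using h by (intro divide_right_mono) auto
      then show ?case using h by (simp add: ph_def)
    qed
  qed
  have lim: "((\<lambda>h. \<sigma> * ((u (x0,t0) - u (x0 - h *\<^sub>R \<nu>, t0)) / h)) \<longlongrightarrow> \<sigma> * L) (at_right 0)"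
    using nd unfolding has_normal_derivative_def by (intro tendsto_mult_left)
  have "c1 \<le> \<sigma> * L" using tendsto_lowerbound[OF lim ev] by simp
  then show ?thesis using c1 by simp
qed


theorem lemma4p1:
  fixes \<Omega> :: "'a::euclidean_space set" and T \<alpha> :: real and u :: "'a \<times> real \<Rightarrow> real"
    and x0 :: 'a and t0 :: real and \<nu> :: 'a
  assumes dom: "bounded_smooth_domain \<Omega>"
    and T: "T > 0" and alpha: "0 < \<alpha>" "\<alpha> < 1"
    and cont: "continuous_on (closure (Omega_T \<Omega> T)) u"
    and Ldef: "\<forall>(x, t)\<in>Omega_T \<Omega> T. L_alpha_defined \<alpha> u x t"
    and x0: "x0 \<in> frontier \<Omega>" "t0 \<in> {0<..T}"
    and sphere: "interior_sphere_property (Omega_T \<Omega> T) x0 t0"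
    and nu: "outward_normal \<Omega> x0 \<nu>"
  shows
    "((\<forall>(x, t)\<in>Omega_T \<Omega> T. L_alpha \<alpha> u x t \<le> 0) \<and>
      (\<forall>p\<in>closure (Omega_T \<Omega> T). u p \<le> u (x0, t0)) \<and>
      (\<exists>V. open V \<and> (x0, t0) \<in> V \<and> (\<forall>p\<in>Omega_T \<Omega> T \<inter> V. u p < u (x0, t0)))
      \<longrightarrow> (\<forall>L. has_normal_derivative u \<nu> x0 t0 L \<longrightarrow> L > 0))
   \<and> ((\<forall>(x, t)\<in>Omega_T \<Omega> T. L_alpha \<alpha> u x t \<ge> 0) \<and>
      (\<forall>p\<in>closure (Omega_T \<Omega> T). u p \<ge> u (x0, t0)) \<and>
      (\<exists>V. open V \<and> (x0, t0) \<in> V \<and> (\<forall>p\<in>Omega_T \<Omega> T \<inter> V. u p > u (x0, t0)))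
      \<longrightarrow> (\<forall>L. has_normal_derivative u \<nu> x0 t0 L \<longrightarrow> L < 0))"
proof -
  have op: "open \<Omega>" using dom by (simp add: bounded_smooth_domain_def)
  show ?thesis
  proof (intro conjI impI allI)
    fix L
    assume H: "(\<forall>(x, t)\<in>Omega_T \<Omega> T. L_alpha \<alpha> u x t \<le> 0) \<and>
      (\<forall>p\<in>closure (Omega_T \<Omega> T). u p \<le> u (x0, t0)) \<and>
      (\<exists>V. open V \<and> (x0, t0) \<in> V \<and> (\<forall>p\<in>Omega_T \<Omega> T \<inter> V. u p < u (x0, t0)))"
      and nd: "has_normal_derivative u \<nu> x0 t0 L"
    obtain V where V: "open V" "(x0, t0) \<in> V" "\<forall>p\<in>Omega_T \<Omega> T \<inter> V. 1 * u p < 1 * u (x0, t0)"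
      using H by auto
    have s: "\<forall>(x, t)\<in>Omega_T \<Omega> T. 1 * L_alpha \<alpha> u x t \<le> 0" using H by auto
    have m: "\<forall>p\<in>closure (Omega_T \<Omega> T). 1 * u p \<le> 1 * u (x0, t0)" using H by auto
    have "1 * L > 0" by (rule core[OF op T alpha cont Ldef x0 sphere nu s m V nd])
    then show "L > 0" by simp
  next
    fix L
    assume H: "(\<forall>(x, t)\<in>Omega_T \<Omega> T. L_alpha \<alpha> u x t \<ge> 0) \<and>
      (\<forall>p\<in>closure (Omega_T \<Omega> T). u p \<ge> u (x0, t0)) \<and>
      (\<exists>V. open V \<and> (x0, t0) \<in> V \<and> (\<forall>p\<in>Omega_T \<Omega> T \<inter> V. u p > u (x0, t0)))"
      and nd: "has_normal_derivative u \<nu> x0 t0 L"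
    obtain V where V: "open V" "(x0, t0) \<in> V" "\<forall>p\<in>Omega_T \<Omega> T \<inter> V. (-1) * u p < (-1) * u (x0, t0)"
      using H by auto
    have s: "\<forall>(x, t)\<in>Omega_T \<Omega> T. (-1) * L_alpha \<alpha> u x t \<le> 0" using H by auto
    have m: "\<forall>p\<in>closure (Omega_T \<Omega> T). (-1) * u p \<le> (-1) * u (x0, t0)" using H by auto
    have "(-1) * L > 0" by (rule core[OF op T alpha cont Ldef x0 sphere nu s m V nd])
    then show "L < 0" by simp
  qed
qed

end
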